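(* Let $m\ge1$, $F(x)=|x^h|^2$ and $G(x)=-x^3$ on $\Omega=\mathbb R^2\times\,]0,1[$. Let $(\widetilde\varrho_\varepsilon)_{0<\varepsilon\le1}$ be a family of positive functions on $\Omega$ solving $\Pi(\widetilde\varrho_\varepsilon(x))=\varepsilon^{2(m-1)}F(x)+\varepsilon^mG(x)$ for all $x\in\Omega$. Then there exist $\varepsilon_0>0$ and $0<\rho_*<1$ such that $\widetilde\varrho_\varepsilon(x)\ge\rho_*$ for all $\varepsilon\in\,]0,\varepsilon_0]$ and all $x\in\Omega$.
   Context: Points of $\Omega$ are $x=(x^h,x^3)$ with $x^h\in\mathbb R^2$. The pressure is $p(\varrho,\vartheta)=\vartheta^{5/2}P(\varrho/\vartheta^{3/2})+\frac a3\vartheta^4$ with $a>0$, where $P\in C^1([0,\infty))\cap C^2(]0,\infty[)$, $P(0)=0$, $P'(Z)>0$ for all $Z\ge0$, $0<\big(\frac53P(Z)-P'(Z)Z\big)/Z<c$ for all $Z>0$, and $\lim_{Z\to+\infty}P(Z)/Z^{5/3}=P_\infty>0$. Fix a constant $\overline\vartheta>0$ and set $\Pi(\varrho):=\int_1^\varrho\frac{\partial_\varrho p(z,\overline\vartheta)}{z}dz$ for $\varrho>0$. *)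

theory Defs
  imports "HOL-Analysis.Analysis"
begin

definition pressure :: "(real \<Rightarrow> real) \<Rightarrow> real \<Rightarrow> real \<Rightarrow> real \<Rightarrow> real" where
  "pressure P a \<rho> \<theta> = \<theta> powr (5/2) * P (\<rho> / \<theta> powr (3/2)) + a / 3 * \<theta> ^ 4"

definition oint :: "real \<Rightarrow> real \<Rightarrow> (real \<Rightarrow> real) \<Rightarrow> real" where
  "oint a b f = (if a \<le> b then integral {a..b} f else - integral {b..a} f)"

definition Pi_fun :: "(real \<Rightarrow> real) \<Rightarrow> real \<Rightarrow> real \<Rightarrow> real \<Rightarrow> real" where
  "Pi_fun P a \<theta>b \<rho> = oint 1 \<rho> (\<lambda>z. deriv (\<lambda>r. pressure P a r \<theta>b) z / z)"

text \<open>Domain Omega = R^2 x ]0,1[, points x = (x^h, x^3).\<close>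
definition Omega :: "((real^2) \<times> real) set" where
  "Omega = UNIV \<times> {0<..<1}"

definition Ffun :: "(real^2) \<times> real \<Rightarrow> real" where
  "Ffun x = (norm (fst x))^2"

definition Gfun :: "(real^2) \<times> real \<Rightarrow> real" where
  "Gfun x = - snd x"

end

theory Submission
  imports Defs
begin

lemma ln_integral:
  fixes r :: real assumes "0 < r" "r \<le> 1"
  shows "((\<lambda>z. 1 / z) has_integral (- ln r)) {r..1}"
proof -
  have "((\<lambda>z. 1 / z) has_integral (ln 1 - ln r)) {r..1}"
  proof (rule fundamental_theorem_of_calculus)
    show "r \<le> 1" by fact
    fix x assume "x \<in> {r..1}"
    then have "x > 0" using assms by auto
    then show "(ln has_vector_derivative 1 / x) (at x within {r..1})"
      by (auto intro!: derivative_eq_intros simp: has_real_derivative_iff_has_vector_derivative[symmetric])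
  qed
  then show ?thesis by simp
qed

theorem lemma2p2:
  fixes P P' P'' :: "real \<Rightarrow> real" and a c Pinf \<theta>b m :: real
    and \<rho> :: "real \<Rightarrow> (real^2) \<times> real \<Rightarrow> real"
  assumes a_pos: "a > 0"
    and thb_pos: "\<theta>b > 0"
    and P_cont: "continuous_on {0..} P"
    and P_deriv: "\<And>Z. Z \<ge> 0 \<Longrightarrow> (P has_real_derivative P' Z) (at Z within {0..})"
    and P'_cont: "continuous_on {0..} P'"
    and P'_deriv: "\<And>Z. Z > 0 \<Longrightarrow> (P' has_real_derivative P'' Z) (at Z)"
    and P''_cont: "continuous_on {0<..} P''"
    and P0: "P 0 = 0"
    and P'_pos: "\<And>Z. Z \<ge> 0 \<Longrightarrow> P' Z > 0"
    and P_bounds: "\<And>Z. Z > 0 \<Longrightarrow> 0 < (5/3 * P Z - P' Z * Z) / Z \<and> (5/3 * P Z - P' Z * Z) / Z < c"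
    and P_lim: "((\<lambda>Z. P Z / Z powr (5/3)) \<longlongrightarrow> Pinf) at_top"
    and Pinf_pos: "Pinf > 0"
    and m_ge: "m \<ge> 1"
    and rho_pos: "\<And>\<epsilon> x. 0 < \<epsilon> \<Longrightarrow> \<epsilon> \<le> 1 \<Longrightarrow> x \<in> Omega \<Longrightarrow> \<rho> \<epsilon> x > 0"
    and rho_eq: "\<And>\<epsilon> x. 0 < \<epsilon> \<Longrightarrow> \<epsilon> \<le> 1 \<Longrightarrow> x \<in> Omega \<Longrightarrow>
        Pi_fun P a \<theta>b (\<rho> \<epsilon> x) = \<epsilon> powr (2 * (m - 1)) * Ffun x + \<epsilon> powr m * Gfun x"
  shows "\<exists>\<epsilon>0 > 0. \<exists>\<rho>s. 0 < \<rho>s \<and> \<rho>s < 1 \<and>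
           (\<forall>\<epsilon>\<in>{0<..\<epsilon>0}. \<forall>x\<in>Omega. \<rho> \<epsilon> x \<ge> \<rho>s)"
proof -
  define s where "s = \<theta>b powr (3/2)"
  have s_pos: "s > 0" using thb_pos by (simp add: s_def)
  have ths: "\<theta>b powr (5/2) / s = \<theta>b"
    using thb_pos by (simp add: s_def powr_diff[symmetric])
  obtain z0 where z0: "z0 \<in> {0..1/s}" and z0min: "\<And>y. y \<in> {0..1/s} \<Longrightarrow> P' z0 \<le> P' y"
  proof -
    have "continuous_on {0..1/s} P'" using P'_cont by (rule continuous_on_subset) auto
    then have "\<exists>x\<in>{0..1/s}. \<forall>y\<in>{0..1/s}. P' x \<le> P' y"
      using s_pos by (intro continuous_attains_inf) auto
    then show ?thesis using that by blast
  qed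
  define k where "k = P' z0"
  have k_pos: "k > 0" using z0 P'_pos by (simp add: k_def)
  define f where "f = (\<lambda>z. deriv (\<lambda>r. pressure P a r \<theta>b) z / z)"
  have fz: "f z = \<theta>b * P' (z / s) / z" if "z > 0" for z
  proof -
    have "(P has_real_derivative P' (z/s)) (at (z/s))"
      using P_deriv[of "z/s"] at_within_interior[of "z/s" "{0..}"] that s_pos by simp
    moreover have "((\<lambda>x. x / s) has_real_derivative (1/s)) (at z)"
      using s_pos by (auto intro!: derivative_eq_intros)
    ultimately have ch: "((\<lambda>x. P (x / s)) has_real_derivative P' (z/s) * (1/s)) (at z)"
      by (rule DERIV_chain2)
    then have "((\<lambda>r. pressure P a r \<theta>b) has_real_derivative
        \<theta>b powr (5/2) * (P' (z/s) * (1/s))) (at z)"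
      unfolding pressure_def s_def[symmetric]
      by (auto intro!: derivative_eq_intros ch)
    then have "deriv (\<lambda>r. pressure P a r \<theta>b) z = \<theta>b powr (5/2) * (P' (z/s) * (1/s))"
      by (rule DERIV_imp_deriv)
    also have "\<dots> = (\<theta>b powr (5/2) / s) * P' (z/s)" by simp
    also have "\<dots> = \<theta>b * P' (z/s)" by (simp only: ths)
    finally show ?thesis by (simp add: f_def)
  qed
  define rs where "rs = min (1/2) (exp (-2 / (\<theta>b * k)))"
  have rs_pos: "rs > 0" and rs_lt: "rs < 1" by (auto simp: rs_def)
  have key: "Pi_fun P a \<theta>b r < -1" if r: "0 < r" "r < rs" for r
  proof -
    have r1: "r < 1" "r \<le> 1" using r rs_def by auto
    have cont: "continuous_on {r..1} (\<lambda>z. \<theta>b * P' (z / s) / z)"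
      using r s_pos
      by (auto intro!: continuous_intros continuous_on_compose2[OF P'_cont] simp: divide_nonneg_pos)
    have int1: "(\<lambda>z. \<theta>b * P' (z / s) / z) integrable_on {r..1}"
      using cont by (rule integrable_continuous_interval)
    have eqint: "integral {r..1} f = integral {r..1} (\<lambda>z. \<theta>b * P' (z / s) / z)"
      using r by (intro integral_cong) (auto simp: fz)
    have "integral {r..1} (\<lambda>z. \<theta>b * k * (1 / z)) \<le> integral {r..1} (\<lambda>z. \<theta>b * P' (z / s) / z)"
    proof (rule integral_le)
      show "(\<lambda>z. \<theta>b * k * (1 / z)) integrable_on {r..1}"
        using has_integral_mult_right[OF ln_integral[OF r(1) r1(2)], of "\<theta>b * k"] by (auto simp: integrable_on_def)
      show "(\<lambda>z. \<theta>b * P' (z / s) / z) integrable_on {r..1}" by (rule int1)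
      fix z assume z: "z \<in> {r..1}"
      then have zp: "z > 0" using r by auto
      have "z / s \<in> {0..1/s}" using z zp s_pos by (auto simp: divide_right_mono)
      then have "k \<le> P' (z/s)" using z0min k_def by auto
      then have "\<theta>b * k \<le> \<theta>b * P' (z/s)" using thb_pos by simp
      then show "\<theta>b * k * (1 / z) \<le> \<theta>b * P' (z / s) / z"
        using zp by (simp add: divide_right_mono)
    qed
    also have "integral {r..1} (\<lambda>z. \<theta>b * k * (1 / z)) = \<theta>b * k * (- ln r)"
      using has_integral_mult_right[OF ln_integral[OF r(1) r1(2)], of "\<theta>b * k"] by (rule integral_unique)
    finally have I: "\<theta>b * k * (- ln r) \<le> integral {r..1} f" using eqint by simp
    have "r < exp (-2 / (\<theta>b * k))" using r rs_def by auto
    then have "ln r < -2 / (\<theta>b * k)" using r by (metis exp_gt_zero ln_exp ln_less_cancel_iff)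
    then have "\<theta>b * k * ln r < \<theta>b * k * (-2 / (\<theta>b * k))"
      using thb_pos k_pos by (intro mult_strict_left_mono) auto
    then have "\<theta>b * k * ln r < -2" using thb_pos k_pos by simp
    moreover have "Pi_fun P a \<theta>b r = - integral {r..1} f"
      using r1 by (simp add: Pi_fun_def oint_def f_def)
    ultimately show ?thesis using I by simp
  qed
  have "\<rho> \<epsilon> x \<ge> rs" if e: "\<epsilon> \<in> {0<..1}" and x: "x \<in> Omega" for \<epsilon> x
  proof (rule ccontr)
    assume "\<not> ?thesis"
    then have "Pi_fun P a \<theta>b (\<rho> \<epsilon> x) < -1" using key rho_pos e x by auto
    moreover have "\<epsilon> powr (2 * (m - 1)) * Ffun x \<ge> 0" by (simp add: Ffun_def)
    moreover have "\<epsilon> powr m * Gfun x \<ge> -1"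
    proof -
      have "\<epsilon> powr m \<le> 1" using e m_ge by (auto intro: powr_le1)
      moreover have "0 < snd x" "snd x < 1" using x by (auto simp: Omega_def)
      moreover have "\<epsilon> powr m \<ge> 0" by simp
      ultimately have "\<epsilon> powr m * snd x \<le> 1"
        by (metis less_eq_real_def mult_le_one)
      then show ?thesis by (simp add: Gfun_def)
    qed
    moreover have "Pi_fun P a \<theta>b (\<rho> \<epsilon> x) = \<epsilon> powr (2 * (m - 1)) * Ffun x + \<epsilon> powr m * Gfun x" using rho_eq e x by auto
    ultimately show False by linarith
  qed
  then show ?thesis using rs_pos rs_lt by (intro exI[of _ 1]) auto
qed

end
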